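(* Let $\mathbb{F}$ be an algebraically closed field with $\mathrm{char}\,\mathbb{F}=2$, and let $\mathcal{A}$ be a (not necessarily unital) subalgebra of $\mathbf{O}$ with $\mathcal{A}\not\subseteq\mathbf{O}_0$ and $\dim\mathcal{A}\ge3$. Then there exists $g\in{\rm G}_2$ such that either (a) $\{e_1,e_2,\mathbf{u}_1\}\subseteq g\mathcal{A}$; or (b) $\{e_1,\mathbf{u}_1,\mathbf{v}_2\}\subseteq g\mathcal{A}$.
   Context: The split octonion algebra $\mathbf{O}$ is the 8-dimensional $\mathbb{F}$-vector space of formal matrices $a=\begin{pmatrix}\alpha&\mathbf{u}\\ \mathbf{v}&\beta\end{pmatrix}$ with $\alpha,\beta\in\mathbb{F}$, $\mathbf{u},\mathbf{v}\in\mathbb{F}^3$, with multiplication $\begin{pmatrix}\alpha&\mathbf{u}\\ \mathbf{v}&\beta\end{pmatrix}\begin{pmatrix}\alpha'&\mathbf{u}'\\ \mathbf{v}'&\beta'\end{pmatrix}=\begin{pmatrix}\alpha\alpha'+\mathbf{u}\cdot\mathbf{v}'&\alpha\mathbf{u}'+\beta'\mathbf{u}-\mathbf{v}\times\mathbf{v}'\\ \alpha'\mathbf{v}+\beta\mathbf{v}'+\mathbf{u}\times\mathbf{u}'&\beta\beta'+\mathbf{v}\cdot\mathbf{u}'\end{pmatrix}$ (dot product and cross product on $\mathbb{F}^3$). Trace $\mathrm{tr}(a)=\alpha+\beta$, $\mathbf{O}_0=\{a\in\mathbf{O}\mid\mathrm{tr}(a)=0\}$. With $\mathbf{c}_1,\mathbf{c}_2,\mathbf{c}_3$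 the standard basis of $\mathbb{F}^3$: $e_1$ has $\alpha=1$ and all else $0$, $e_2$ has $\beta=1$ and all else $0$, $\mathbf{u}_i$ has $\mathbf{u}=\mathbf{c}_i$ and all else $0$, $\mathbf{v}_i$ has $\mathbf{v}=\mathbf{c}_i$ and all else $0$. ${\rm G}_2=\mathrm{Aut}(\mathbf{O})$. *)

theory Defs
  imports "HOL-Analysis.Analysis" "HOL-Computational_Algebra.Polynomial"
begin

text \<open>Split octonions over a field 'a, modelled as the coordinate space 'a^8.
 Coordinate layout: index 0 = alpha, indices 1,2,3 = u, indices 4,5,6 = v, index 7 = beta.\<close>

type_synonym 'a oct = "'a ^ 8"

definition dot3 :: "'a::comm_ring_1 ^ 3 \<Rightarrow> 'a ^ 3 \<Rightarrow> 'a" where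
  "dot3 x y = x$1 * y$1 + x$2 * y$2 + x$3 * y$3"

definition cross3f :: "'a::comm_ring_1 ^ 3 \<Rightarrow> 'a ^ 3 \<Rightarrow> 'a ^ 3" where
  "cross3f x y = (\<chi> j. if j = 1 then x$2 * y$3 - x$3 * y$2
                      else if j = 2 then x$3 * y$1 - x$1 * y$3
                      else x$1 * y$2 - x$2 * y$1)"

definition oalpha :: "'a oct \<Rightarrow> 'a" where "oalpha a = a$0"
definition obeta :: "'a oct \<Rightarrow> 'a" where "obeta a = a$7"
definition ou :: "'a oct \<Rightarrow> 'a ^ 3" where
  "ou a = (\<chi> j. if j = 1 then a$1 else if j = 2 then a$2 else a$3)"
definition ov :: "'a oct \<Rightarrow> 'a ^ 3" where
  "ov a = (\<chi> j. if j = 1 then a$4 else if j = 2 then a$5 else a$6)"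

definition mkoct :: "'a::zero \<Rightarrow> 'a ^ 3 \<Rightarrow> 'a ^ 3 \<Rightarrow> 'a \<Rightarrow> 'a oct" where
  "mkoct \<alpha> u v \<beta> = (\<chi> i. if i = 0 then \<alpha> else if i = 1 then u$1 else if i = 2 then u$2
     else if i = 3 then u$3 else if i = 4 then v$1 else if i = 5 then v$2
     else if i = 6 then v$3 else \<beta>)"

text \<open>Split octonion multiplication (Zorn vector matrices).\<close>
definition omult :: "'a::comm_ring_1 oct \<Rightarrow> 'a oct \<Rightarrow> 'a oct" where
  "omult a b = mkoct
     (oalpha a * oalpha b + dot3 (ou a) (ov b))
     (oalpha a *s ou b + obeta b *s ou a - cross3f (ov a) (ov b))
     (oalpha b *s ov a + obeta a *s ov b + cross3f (ou a) (ou b))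
     (obeta a * obeta b + dot3 (ov a) (ou b))"

definition otr :: "'a::comm_ring_1 oct \<Rightarrow> 'a" where "otr a = oalpha a + obeta a"

definition O0 :: "'a::comm_ring_1 oct set" where "O0 = {a. otr a = 0}"

definition c3 :: "nat \<Rightarrow> 'a::comm_ring_1 ^ 3" where
  "c3 i = (\<chi> j. if j = of_nat i then 1 else 0)"

definition e1 :: "'a::comm_ring_1 oct" where "e1 = mkoct 1 0 0 0"
definition e2 :: "'a::comm_ring_1 oct" where "e2 = mkoct 0 0 0 1"
definition uu :: "nat \<Rightarrow> 'a::comm_ring_1 oct" where "uu i = mkoct 0 (c3 i) 0 0"
definition vv :: "nat \<Rightarrow> 'a::comm_ring_1 oct" where "vv i = mkoct 0 0 (c3 i) 0"

definition is_subalgebra :: "'a::field oct set \<Rightarrow> bool" where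
  "is_subalgebra A \<longleftrightarrow> vec.subspace A \<and> (\<forall>x\<in>A. \<forall>y\<in>A. omult x y \<in> A)"

definition G2 :: "('a::field oct \<Rightarrow> 'a oct) set" where
  "G2 = {g. Vector_Spaces.linear (*s) (*s) g \<and> bij g \<and> (\<forall>x y. g (omult x y) = omult (g x) (g y))}"

end

theory Submission
  imports Defs
begin


definition oc :: "'a::zero \<Rightarrow> 'a \<Rightarrow> 'a \<Rightarrow> 'a \<Rightarrow> 'a \<Rightarrow> 'a \<Rightarrow> 'a \<Rightarrow> 'a \<Rightarrow> 'a oct" where
  "oc a0 a1 a2 a3 a4 a5 a6 a7 = (\<chi> i. if i = 0 then a0 else if i = 1 then a1 else if i = 2 then a2
     else if i = 3 then a3 else if i = 4 then a4 else if i = 5 then a5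
     else if i = 6 then a6 else a7)"

lemma oc_nth[simp]:
  "oc a0 a1 a2 a3 a4 a5 a6 a7 $ 0 = a0" "oc a0 a1 a2 a3 a4 a5 a6 a7 $ 1 = a1"
  "oc a0 a1 a2 a3 a4 a5 a6 a7 $ 2 = a2" "oc a0 a1 a2 a3 a4 a5 a6 a7 $ 3 = a3"
  "oc a0 a1 a2 a3 a4 a5 a6 a7 $ 4 = a4" "oc a0 a1 a2 a3 a4 a5 a6 a7 $ 5 = a5"
  "oc a0 a1 a2 a3 a4 a5 a6 a7 $ 6 = a6" "oc a0 a1 a2 a3 a4 a5 a6 a7 $ 7 = a7"
  by (simp_all add: oc_def)

lemma exhaust_8:
  fixes x :: 8
  shows "x = 0 \<or> x = 1 \<or> x = 2 \<or> x = 3 \<or> x = 4 \<or> x = 5 \<or> x = 6 \<or> x = 7"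
proof (induct x)
  case (of_int z)
  then have "z = 0 \<or> z = 1 \<or> z = 2 \<or> z = 3 \<or> z = 4 \<or> z = 5 \<or> z = 6 \<or> z = 7" by fastforce
  then show ?case by auto
qed

lemma oct_eqI:
  fixes x y :: "'a oct"
  assumes "x$0 = y$0" "x$1 = y$1" "x$2 = y$2" "x$3 = y$3" "x$4 = y$4" "x$5 = y$5" "x$6 = y$6" "x$7 = y$7"
  shows "x = y"
  unfolding vec_eq_iff
proof
  fix i :: 8 show "x$i = y$i" using exhaust_8[of i] assms by auto
qed

lemma oc_eta: "x = oc (x$0) (x$1) (x$2) (x$3) (x$4) (x$5) (x$6) (x$7)"
  by (rule oct_eqI) simp_all

lemma oc_eq_iff[simp]: "oc a0 a1 a2 a3 a4 a5 a6 a7 = oc b0 b1 b2 b3 b4 b5 b6 b7 \<longleftrightarrow>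
  a0 = b0 \<and> a1 = b1 \<and> a2 = b2 \<and> a3 = b3 \<and> a4 = b4 \<and> a5 = b5 \<and> a6 = b6 \<and> a7 = b7"
  by (metis oc_nth oct_eqI)

lemma oc_add[simp]: "oc a0 a1 a2 a3 a4 a5 a6 a7 + oc b0 b1 b2 b3 b4 b5 b6 b7 =
   oc (a0+b0) (a1+b1) (a2+b2) (a3+b3) (a4+b4) (a5+b5) (a6+b6) (a7+b7)"
  by (rule oct_eqI) simp_all

lemma oc_diff[simp]: "oc a0 a1 a2 a3 a4 a5 a6 a7 - oc b0 b1 b2 b3 b4 b5 b6 b7 =
   oc (a0-b0) (a1-b1) (a2-b2) (a3-b3) (a4-b4) (a5-b5) (a6-b6) (a7-b7)"
  by (rule oct_eqI) simp_all

lemma oc_smult[simp]: "c *s oc a0 a1 a2 a3 a4 a5 a6 a7 =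
   oc (c*a0) (c*a1) (c*a2) (c*a3) (c*a4) (c*a5) (c*a6) (c*a7)"
  by (rule oct_eqI) simp_all

lemma oc_zero: "(0::'a::zero oct) = oc 0 0 0 0 0 0 0 0"
  by (rule oct_eqI) simp_all

lemma mkoct_oc: "mkoct a u v b = oc a (u$1) (u$2) (u$3) (v$1) (v$2) (v$3) b"
  unfolding mkoct_def oc_def by simp


lemma e1_oc: "e1 = oc 1 0 0 0 0 0 0 0" by (simp add: e1_def mkoct_oc)
lemma e2_oc: "e2 = oc 0 0 0 0 0 0 0 1" by (simp add: e2_def mkoct_oc)
lemma uu1_oc: "uu 1 = oc 0 1 0 0 0 0 0 0" by (simp add: uu_def mkoct_oc c3_def)
lemma uu1_oc': "uu (Suc 0) = oc 0 1 0 0 0 0 0 0" using uu1_oc by simp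
lemma vv2_oc: "vv 2 = oc 0 0 0 0 0 1 0 0" by (simp add: vv_def mkoct_oc c3_def)

lemma omult_oc: "omult (oc a0 a1 a2 a3 a4 a5 a6 a7) (oc b0 b1 b2 b3 b4 b5 b6 b7) =
  oc (a0*b0 + a1*b4 + a2*b5 + a3*b6)
     (a0*b1 + b7*a1 - (a5*b6 - a6*b5))
     (a0*b2 + b7*a2 - (a6*b4 - a4*b6))
     (a0*b3 + b7*a3 - (a4*b5 - a5*b4))
     (b0*a4 + a7*b4 + (a2*b3 - a3*b2))
     (b0*a5 + a7*b5 + (a3*b1 - a1*b3))
     (b0*a6 + a7*b6 + (a1*b2 - a2*b1))
     (a7*b7 + a4*b1 + a5*b2 + a6*b3)"
  unfolding omult_def mkoct_oc oalpha_def obeta_def ou_def ov_def dot3_def cross3f_def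
  by (simp add: algebra_simps)

lemma omult_nth: "omult x y = 
  oc (x$0*y$0 + x$1*y$4 + x$2*y$5 + x$3*y$6)
     (x$0*y$1 + y$7*x$1 - (x$5*y$6 - x$6*y$5))
     (x$0*y$2 + y$7*x$2 - (x$6*y$4 - x$4*y$6))
     (x$0*y$3 + y$7*x$3 - (x$4*y$5 - x$5*y$4))
     (y$0*x$4 + x$7*y$4 + (x$2*y$3 - x$3*y$2))
     (y$0*x$5 + x$7*y$5 + (x$3*y$1 - x$1*y$3))
     (y$0*x$6 + x$7*y$6 + (x$1*y$2 - x$2*y$1))
     (x$7*y$7 + x$4*y$1 + x$5*y$2 + x$6*y$3)"
  by (subst oc_eta[of x], subst oc_eta[of y], subst omult_oc) simp



lemma linI:
  fixes g :: "'a::field oct \<Rightarrow> 'a oct"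
  assumes "\<And>x y. g (x + y) = g x + g y" "\<And>c x. g (c *s x) = c *s g x"
  shows "Vector_Spaces.linear (*s) (*s) g"
  unfolding Vector_Spaces.linear_iff using assms vec.vector_space_axioms by auto

lemma G2I:
  fixes g :: "'a::field oct \<Rightarrow> 'a oct"
  assumes "Vector_Spaces.linear (*s) (*s) g" "\<And>x. h (g x) = x" "\<And>x. g (h x) = x"
    "\<And>x y. g (omult x y) = omult (g x) (g y)"
  shows "g \<in> G2"
proof -
  have "bij g" by (rule o_bij[of h]) (use assms in auto)
  then show ?thesis unfolding G2_def using assms by auto
qed

lemma G2_comp: "g \<in> G2 \<Longrightarrow> h \<in> G2 \<Longrightarrow> g \<circ> h \<in> G2"
  unfolding G2_def by (auto intro: Vector_Spaces.linear_compose bij_comp)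

lemma G2_inv: assumes "g \<in> G2" shows "inv g \<in> G2"
proof -
  have l: "Vector_Spaces.linear (*s) (*s) g" and b: "bij g" and m: "\<And>x y. g (omult x y) = omult (g x) (g y)"
    using assms unfolding G2_def by auto
  have "Vector_Spaces.linear (*s) (*s) (inv g)"
    using vec.inj_linear_imp_inv_linear[OF l] b bij_is_inj by blast
  moreover have "bij (inv g)" using b by (simp add: bij_imp_bij_inv)
  moreover have "inv g (omult x y) = omult (inv g x) (inv g y)" for x y
  proof -
    have "g (omult (inv g x) (inv g y)) = omult x y" using m b by (simp add: surj_f_inv_f bij_is_surj)
    then show ?thesis using b by (metis bij_inv_eq_iff)
  qed
  ultimately show ?thesis unfolding G2_def by auto
qed

definition phi :: "'a::comm_ring_1 \<Rightarrow> 'a \<Rightarrow> 'a \<Rightarrow> 'a oct \<Rightarrow> 'a oct" where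
  "phi a1 a2 a3 x = oc (x$0 + (a1*x$4 + a2*x$5 + a3*x$6))
     (x$1 + (x$7 - x$0)*a1 - (a1*x$4 + a2*x$5 + a3*x$6)*a1)
     (x$2 + (x$7 - x$0)*a2 - (a1*x$4 + a2*x$5 + a3*x$6)*a2)
     (x$3 + (x$7 - x$0)*a3 - (a1*x$4 + a2*x$5 + a3*x$6)*a3)
     (x$4 - (a2*x$3 - a3*x$2))
     (x$5 - (a3*x$1 - a1*x$3))
     (x$6 - (a1*x$2 - a2*x$1))
     (x$7 - (a1*x$4 + a2*x$5 + a3*x$6))"

definition psi :: "'a::comm_ring_1 \<Rightarrow> 'a \<Rightarrow> 'a \<Rightarrow> 'a oct \<Rightarrow> 'a oct" where
  "psi b1 b2 b3 x = oc (x$0 + (b1*x$1 + b2*x$2 + b3*x$3))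
     (x$1 - (b2*x$6 - b3*x$5))
     (x$2 - (b3*x$4 - b1*x$6))
     (x$3 - (b1*x$5 - b2*x$4))
     (x$4 + (x$7 - x$0)*b1 - (b1*x$1 + b2*x$2 + b3*x$3)*b1)
     (x$5 + (x$7 - x$0)*b2 - (b1*x$1 + b2*x$2 + b3*x$3)*b2)
     (x$6 + (x$7 - x$0)*b3 - (b1*x$1 + b2*x$2 + b3*x$3)*b3)
     (x$7 - (b1*x$1 + b2*x$2 + b3*x$3))"

definition tau :: "'a::comm_ring_1 oct \<Rightarrow> 'a oct" where
  "tau x = oc (x$7) (- x$4) (- x$5) (- x$6) (- x$1) (- x$2) (- x$3) (x$0)"

lemma phi_mult: "phi a1 a2 a3 (omult x y) = omult (phi a1 a2 a3 x) (phi a1 a2 a3 y)"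
  by (rule oct_eqI; simp add: phi_def omult_nth algebra_simps)

lemma psi_mult: "psi a1 a2 a3 (omult x y) = omult (psi a1 a2 a3 x) (psi a1 a2 a3 y)"
  by (rule oct_eqI; simp add: psi_def omult_nth algebra_simps)

lemma tau_mult: "tau (omult x y) = omult (tau x) (tau y)"
  by (rule oct_eqI; simp add: tau_def omult_nth algebra_simps)

lemma phi_inv: "phi (-a1) (-a2) (-a3) (phi a1 a2 a3 x) = x"
  by (rule oct_eqI; simp add: phi_def algebra_simps)

lemma psi_inv: "psi (-a1) (-a2) (-a3) (psi a1 a2 a3 x) = x"
  by (rule oct_eqI; simp add: psi_def algebra_simps)

lemma tau_inv: "tau (tau x) = x"
  by (rule oct_eqI; simp add: tau_def)

lemma phi_lin: "Vector_Spaces.linear (*s) (*s) (phi a1 a2 a3 :: 'a::field oct \<Rightarrow> _)"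
  by (rule linI; rule oct_eqI; simp add: phi_def algebra_simps)

lemma psi_lin: "Vector_Spaces.linear (*s) (*s) (psi a1 a2 a3 :: 'a::field oct \<Rightarrow> _)"
  by (rule linI; rule oct_eqI; simp add: psi_def algebra_simps)

lemma tau_lin: "Vector_Spaces.linear (*s) (*s) (tau :: 'a::field oct \<Rightarrow> _)"
  by (rule linI; rule oct_eqI; simp add: tau_def algebra_simps)

lemma phi_G2: "(phi a1 a2 a3 :: 'a::field oct \<Rightarrow> _) \<in> G2"
  by (rule G2I[OF phi_lin, of "phi (-a1) (-a2) (-a3)"]) (auto simp: phi_inv phi_mult phi_inv[of "-a1" "-a2" "-a3", simplified])

lemma psi_G2: "(psi a1 a2 a3 :: 'a::field oct \<Rightarrow> _) \<in> G2"
  by (rule G2I[OF psi_lin, of "psi (-a1) (-a2) (-a3)"]) (auto simp: psi_inv psi_mult psi_inv[of "-a1" "-a2" "-a3", simplified])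

lemma tau_G2: "(tau :: 'a::field oct \<Rightarrow> _) \<in> G2"
  by (rule G2I[OF tau_lin, of tau]) (auto simp: tau_inv tau_mult)



definition gN :: "'a::comm_ring_1 \<Rightarrow> 'a \<Rightarrow> 'a \<Rightarrow> 'a \<Rightarrow> 'a \<Rightarrow> 'a \<Rightarrow> 'a \<Rightarrow> 'a \<Rightarrow> 'a \<Rightarrow> 'a oct \<Rightarrow> 'a oct" where
  "gN p1 p2 p3 q1 q2 q3 r1 r2 r3 x = oc (x$0) (x$1*p1 + x$2*q1 + x$3*r1) (x$1*p2 + x$2*q2 + x$3*r2) (x$1*p3 + x$2*q3 + x$3*r3) (x$4*(q2*r3 - q3*r2) + x$5*(r2*p3 - r3*p2) + x$6*(p2*q3 - p3*q2)) (x$4*(q3*r1 - q1*r3) + x$5*(r3*p1 - r1*p3) + x$6*(p3*q1 - p1*q3)) (x$4*(q1*r2 - q2*r1) + x$5*(r1*p2 - r2*p1) + x$6*(p1*q2 - p2*q1)) (x$7)"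

definition gL :: "'a::comm_ring_1 \<Rightarrow> 'a \<Rightarrow> 'a \<Rightarrow> 'a \<Rightarrow> 'a \<Rightarrow> 'a \<Rightarrow> 'a \<Rightarrow> 'a \<Rightarrow> 'a \<Rightarrow> 'a oct \<Rightarrow> 'a oct" where
  "gL p1 p2 p3 q1 q2 q3 r1 r2 r3 x = oc (x$0) ((q2*r3 - q3*r2)*x$1 + (q3*r1 - q1*r3)*x$2 + (q1*r2 - q2*r1)*x$3) ((r2*p3 - r3*p2)*x$1 + (r3*p1 - r1*p3)*x$2 + (r1*p2 - r2*p1)*x$3) ((p2*q3 - p3*q2)*x$1 + (p3*q1 - p1*q3)*x$2 + (p1*q2 - p2*q1)*x$3) (p1*x$4 + p2*x$5 + p3*x$6) (q1*x$4 + q2*x$5 + q3*x$6) (r1*x$4 + r2*x$5 + r3*x$6) (x$7)"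

definition det3 :: "'a::comm_ring_1 \<Rightarrow> 'a \<Rightarrow> 'a \<Rightarrow> 'a \<Rightarrow> 'a \<Rightarrow> 'a \<Rightarrow> 'a \<Rightarrow> 'a \<Rightarrow> 'a \<Rightarrow> 'a" where
  "det3 p1 p2 p3 q1 q2 q3 r1 r2 r3 = (p1*(q2*r3 - q3*r2) + p2*(q3*r1 - q1*r3) + p3*(q1*r2 - q2*r1))"

definition omultD :: "'a::comm_ring_1 \<Rightarrow> 'a oct \<Rightarrow> 'a oct \<Rightarrow> 'a oct" where "omultD D x y =
  oc (x$0*y$0 + D*(x$1*y$4 + x$2*y$5 + x$3*y$6))
     (x$0*y$1 + y$7*x$1 - D*(x$5*y$6 - x$6*y$5))
     (x$0*y$2 + y$7*x$2 - D*(x$6*y$4 - x$4*y$6))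
     (x$0*y$3 + y$7*x$3 - D*(x$4*y$5 - x$5*y$4))
     (y$0*x$4 + x$7*y$4 + (x$2*y$3 - x$3*y$2))
     (y$0*x$5 + x$7*y$5 + (x$3*y$1 - x$1*y$3))
     (y$0*x$6 + x$7*y$6 + (x$1*y$2 - x$2*y$1))
     (x$7*y$7 + D*(x$4*y$1 + x$5*y$2 + x$6*y$3))"

lemma omultD_1: "omultD 1 x y = omult x y"
  by (simp add: omultD_def omult_nth)

lemma gN_multD: "omult (gN p1 p2 p3 q1 q2 q3 r1 r2 r3 x) (gN p1 p2 p3 q1 q2 q3 r1 r2 r3 y) =
   gN p1 p2 p3 q1 q2 q3 r1 r2 r3 (omultD (det3 p1 p2 p3 q1 q2 q3 r1 r2 r3) x y)"
  by (rule oct_eqI; simp add: gN_def omult_nth omultD_def det3_def algebra_simps)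

lemma gL_gN_gen: "gL p1 p2 p3 q1 q2 q3 r1 r2 r3 (gN p1 p2 p3 q1 q2 q3 r1 r2 r3 x) = oc (x$0) (det3 p1 p2 p3 q1 q2 q3 r1 r2 r3 * x$1) (det3 p1 p2 p3 q1 q2 q3 r1 r2 r3 * x$2) (det3 p1 p2 p3 q1 q2 q3 r1 r2 r3 * x$3)
   (det3 p1 p2 p3 q1 q2 q3 r1 r2 r3 * x$4) (det3 p1 p2 p3 q1 q2 q3 r1 r2 r3 * x$5) (det3 p1 p2 p3 q1 q2 q3 r1 r2 r3 * x$6) (x$7)"
  by (rule oct_eqI; simp add: gN_def gL_def det3_def algebra_simps)

lemma gN_gL_gen: "gN p1 p2 p3 q1 q2 q3 r1 r2 r3 (gL p1 p2 p3 q1 q2 q3 r1 r2 r3 x) = oc (x$0) (det3 p1 p2 p3 q1 q2 q3 r1 r2 r3 * x$1) (det3 p1 p2 p3 q1 q2 q3 r1 r2 r3 * x$2) (det3 p1 p2 p3 q1 q2 q3 r1 r2 r3 * x$3)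
   (det3 p1 p2 p3 q1 q2 q3 r1 r2 r3 * x$4) (det3 p1 p2 p3 q1 q2 q3 r1 r2 r3 * x$5) (det3 p1 p2 p3 q1 q2 q3 r1 r2 r3 * x$6) (x$7)"
  by (rule oct_eqI; simp add: gN_def gL_def det3_def algebra_simps)

lemma gN_lin: "Vector_Spaces.linear (*s) (*s) (gN p1 p2 p3 q1 q2 q3 r1 r2 r3 :: 'a::field oct \<Rightarrow> _)"
  by (rule linI; rule oct_eqI; simp add: gN_def algebra_simps)

lemma gN_G2: assumes "det3 p1 p2 p3 q1 q2 q3 r1 r2 r3 = (1::'a::field)" shows "gN p1 p2 p3 q1 q2 q3 r1 r2 r3 \<in> G2"
proof (rule G2I[OF gN_lin, of "gL p1 p2 p3 q1 q2 q3 r1 r2 r3"])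
  fix x :: "'a oct"
  show "gL p1 p2 p3 q1 q2 q3 r1 r2 r3 (gN p1 p2 p3 q1 q2 q3 r1 r2 r3 x) = x" unfolding gL_gN_gen assms by (rule oct_eqI) simp_all
  show "gN p1 p2 p3 q1 q2 q3 r1 r2 r3 (gL p1 p2 p3 q1 q2 q3 r1 r2 r3 x) = x" unfolding gN_gL_gen assms by (rule oct_eqI) simp_all
next
  fix x y :: "'a oct"
  show "gN p1 p2 p3 q1 q2 q3 r1 r2 r3 (omult x y) = omult (gN p1 p2 p3 q1 q2 q3 r1 r2 r3 x) (gN p1 p2 p3 q1 q2 q3 r1 r2 r3 y)"
    unfolding gN_multD assms omultD_1 ..
qed

lemma gN_e1: "gN p1 p2 p3 q1 q2 q3 r1 r2 r3 e1 = e1" by (simp add: gN_def e1_oc)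
lemma gN_e2: "gN p1 p2 p3 q1 q2 q3 r1 r2 r3 e2 = e2" by (simp add: gN_def e2_oc)
lemma gN_uu1: "gN p1 p2 p3 q1 q2 q3 r1 r2 r3 (uu 1) = oc 0 p1 p2 p3 0 0 0 0" unfolding uu1_oc by (simp add: gN_def)
lemma gN_vv2: "gN p1 p2 p3 q1 q2 q3 r1 r2 r3 (vv 2) = oc 0 0 0 0 (r2*p3 - r3*p2) (r3*p1 - r1*p3) (r1*p2 - r2*p1) 0" by (simp add: gN_def vv2_oc)

lemma cross_solve:
  fixes u1 u2 u3 w1 w2 w3 :: "'a::field"
  assumes "u1 \<noteq> 0 \<or> u2 \<noteq> 0 \<or> u3 \<noteq> 0" "u1*w1 + u2*w2 + u3*w3 = 0"
  shows "\<exists>r1 r2 r3. r2*u3 - r3*u2 = w1 \<and> r3*u1 - r1*u3 = w2 \<and> r1*u2 - r2*u1 = w3"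
proof -
  consider "u1 \<noteq> 0" | "u2 \<noteq> 0" | "u3 \<noteq> 0" using assms(1) by blast
  then show ?thesis
  proof cases
    case 1
    show ?thesis
      by (rule exI[of _ 0], rule exI[of _ "- w3/u1"], rule exI[of _ "w2/u1"])
         (use 1 assms(2) in \<open>auto simp: field_simps\<close>, algebra)
  next
    case 2
    show ?thesis
      by (rule exI[of _ "w3/u2"], rule exI[of _ 0], rule exI[of _ "- w1/u2"])
         (use 2 assms(2) in \<open>auto simp: field_simps\<close>, algebra)
  next
    case 3
    show ?thesis
      by (rule exI[of _ "- w2/u3"], rule exI[of _ "w1/u3"], rule exI[of _ 0])
         (use 3 assms(2) in \<open>auto simp: field_simps\<close>, algebra)
  qed
qed



lemma dot_one:
  fixes w1 w2 w3 :: "'a::field"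
  assumes "w1 \<noteq> 0 \<or> w2 \<noteq> 0 \<or> w3 \<noteq> 0"
  shows "\<exists>q1 q2 q3. q1 * w1 + q2 * w2 + q3 * w3 = 1"
  using assms
proof (elim disjE)
  assume "w1 \<noteq> 0" then show ?thesis by (intro exI[of _ "1/w1"] exI[of _ 0]) simp
next
  assume "w2 \<noteq> 0" then show ?thesis by (intro exI[of _ "1/w2"] exI[of _ 0]) simp
next
  assume "w3 \<noteq> 0" then show ?thesis by (intro exI[of _ "1/w3"] exI[of _ 0]) simp
qed

lemma det3_rot: "det3 p1 p2 p3 q1 q2 q3 r1 r2 r3 =
   q1 * (r2*p3 - r3*p2) + q2 * (r3*p1 - r1*p3) + q3 * (r1*p2 - r2*p1)"
  by (simp add: det3_def algebra_simps)

lemma frame: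
  fixes u1 u2 u3 w1 w2 w3 :: "'a::field"
  assumes "u1 \<noteq> 0 \<or> u2 \<noteq> 0 \<or> u3 \<noteq> 0" "w1 \<noteq> 0 \<or> w2 \<noteq> 0 \<or> w3 \<noteq> 0"
    "u1 * w1 + u2 * w2 + u3 * w3 = 0"
  shows "\<exists>q1 q2 q3 r1 r2 r3. det3 u1 u2 u3 q1 q2 q3 r1 r2 r3 = 1 \<and>
     r2*u3 - r3*u2 = w1 \<and> r3*u1 - r1*u3 = w2 \<and> r1*u2 - r2*u1 = w3"
proof -
  obtain r1 r2 r3 where r: "r2*u3 - r3*u2 = w1" "r3*u1 - r1*u3 = w2" "r1*u2 - r2*u1 = w3"
    using cross_solve[OF assms(1,3)] by blast
  obtain q1 q2 q3 where q: "q1 * w1 + q2 * w2 + q3 * w3 = 1" using dot_one[OF assms(2)] by blast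
  have "det3 u1 u2 u3 q1 q2 q3 r1 r2 r3 = 1" unfolding det3_rot r q ..
  with r show ?thesis by blast
qed

lemma perp_exists:
  fixes u1 u2 u3 :: "'a::field"
  assumes "u1 \<noteq> 0 \<or> u2 \<noteq> 0 \<or> u3 \<noteq> 0"
  shows "\<exists>w1 w2 w3. (w1 \<noteq> 0 \<or> w2 \<noteq> 0 \<or> w3 \<noteq> 0) \<and> u1 * w1 + u2 * w2 + u3 * w3 = 0"
  using assms
proof (elim disjE)
  assume "u1 \<noteq> 0" then show ?thesis
    by (intro exI[of _ "- u2"] exI[of _ u1] exI[of _ 0]) (simp add: algebra_simps)
next
  assume "u2 \<noteq> 0" then show ?thesis
    by (intro exI[of _ u2] exI[of _ "- u1"] exI[of _ 0]) (simp add: algebra_simps)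
next
  assume "u3 \<noteq> 0" then show ?thesis
    by (intro exI[of _ 0] exI[of _ "- u3"] exI[of _ u2]) (simp add: algebra_simps)
qed

lemma frame_G2:
  fixes u1 u2 u3 w1 w2 w3 :: "'a::field"
  assumes "u1 \<noteq> 0 \<or> u2 \<noteq> 0 \<or> u3 \<noteq> 0" "w1 \<noteq> 0 \<or> w2 \<noteq> 0 \<or> w3 \<noteq> 0"
    "u1 * w1 + u2 * w2 + u3 * w3 = 0"
  shows "\<exists>h\<in>G2. h e1 = e1 \<and> h e2 = e2 \<and> h (uu 1) = oc 0 u1 u2 u3 0 0 0 0 \<and>
           h (vv 2) = oc 0 0 0 0 w1 w2 w3 0"
proof -
  obtain q1 q2 q3 r1 r2 r3 where d: "det3 u1 u2 u3 q1 q2 q3 r1 r2 r3 = 1" and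
     r: "r2*u3 - r3*u2 = w1" "r3*u1 - r1*u3 = w2" "r1*u2 - r2*u1 = w3"
    using frame[OF assms] by blast
  show ?thesis
    by (rule bexI[OF _ gN_G2[OF d]]) (simp add: gN_def e1_oc e2_oc uu1_oc' vv2_oc r)
qed

lemma frame_G2':
  fixes u1 u2 u3 :: "'a::field"
  assumes "u1 \<noteq> 0 \<or> u2 \<noteq> 0 \<or> u3 \<noteq> 0"
  shows "\<exists>h\<in>G2. h e1 = e1 \<and> h e2 = e2 \<and> h (uu 1) = oc 0 u1 u2 u3 0 0 0 0"
  using perp_exists[OF assms] frame_G2[OF assms] by blast



definition idem :: "'a::comm_ring_1 oct \<Rightarrow> bool" where
  "idem e \<longleftrightarrow> e$0 + e$7 = 1 \<and> e$1 * e$4 + e$2 * e$5 + e$3 * e$6 = e$0 * e$7"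

lemma reach_nz:
  fixes e :: "'a::field oct"
  assumes "idem e" "e$0 \<noteq> 0"
  shows "\<exists>h\<in>G2. h e1 = e"
proof -
  define b1 where "b1 = - e$4 / e$0"
  define b2 where "b2 = - e$5 / e$0"
  define b3 where "b3 = - e$6 / e$0"
  have tr: "e$0 + e$7 = 1" and uv: "e$1 * e$4 + e$2 * e$5 + e$3 * e$6 = e$0 * e$7"
    using assms(1) unfolding idem_def by auto
  have s: "b1 * e$1 + b2 * e$2 + b3 * e$3 = - e$7"
  proof -
    have "b1 * e$1 + b2 * e$2 + b3 * e$3 = - (e$1 * e$4 + e$2 * e$5 + e$3 * e$6) / e$0"
      unfolding b1_def b2_def b3_def using assms(2) by (simp add: field_simps)
    also have "\<dots> = - e$7" using assms(2) unfolding uv by simp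
    finally show ?thesis .
  qed
  have p: "phi (- e$1) (- e$2) (- e$3) e1 = oc 1 (e$1) (e$2) (e$3) 0 0 0 0"
    by (simp add: phi_def e1_oc)
  have a0: "1 - e$7 = e$0" using tr by (simp add: algebra_simps)
  have psi_at: "psi b1 b2 b3 (oc 1 x1 x2 x3 0 0 0 0) = oc (1 + (b1 * x1 + b2 * x2 + b3 * x3)) x1 x2 x3
     (- b1 - (b1 * x1 + b2 * x2 + b3 * x3) * b1) (- b2 - (b1 * x1 + b2 * x2 + b3 * x3) * b2)
     (- b3 - (b1 * x1 + b2 * x2 + b3 * x3) * b3) (- (b1 * x1 + b2 * x2 + b3 * x3))" for x1 x2 x3
    by (simp add: psi_def)
  have k2: "- (- y / e$0) - (- e$7) * (- y / e$0) = y" for y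
  proof -
    have "- (- y / e$0) - (- e$7) * (- y / e$0) = y / e$0 * (1 - e$7)" by (simp add: algebra_simps)
    also have "\<dots> = y" using a0 assms(2) by simp
    finally show ?thesis .
  qed
  have "psi b1 b2 b3 (oc 1 (e$1) (e$2) (e$3) 0 0 0 0) = e"
    unfolding psi_at s unfolding b1_def b2_def b3_def k2 by (rule oct_eqI) (simp_all add: a0)
  then have "(psi b1 b2 b3 \<circ> phi (- e$1) (- e$2) (- e$3)) e1 = e" using p by simp
  moreover have "psi b1 b2 b3 \<circ> phi (- e$1) (- e$2) (- e$3) \<in> G2"
    by (rule G2_comp[OF psi_G2 phi_G2])
  ultimately show ?thesis by blast
qed

lemma reach:
  fixes e :: "'a::field oct"
  assumes "idem e"
  shows "\<exists>h\<in>G2. h e1 = e"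
proof (cases "e$0 = 0")
  case False then show ?thesis using reach_nz[OF assms] by blast
next
  case a0: True
  have tr: "e$0 + e$7 = 1" and uv: "e$1 * e$4 + e$2 * e$5 + e$3 * e$6 = e$0 * e$7"
    using assms(1) unfolding idem_def by auto
  have b1: "e$7 = 1" using tr a0 by simp
  have uv0: "e$1 * e$4 + e$2 * e$5 + e$3 * e$6 = 0" using uv a0 by simp
  show ?thesis
  proof (cases "e$4 \<noteq> 0 \<or> e$5 \<noteq> 0 \<or> e$6 \<noteq> 0")
    case True
    then obtain c1 c2 c3 where c: "c1 * e$4 + c2 * e$5 + c3 * e$6 = 1"
      using dot_one by blast
    define e' where "e' = phi c1 c2 c3 e"
    have e'eq: "e' = oc 1 (e$1) (e$2) (e$3) (e$4 - (c2 * e$3 - c3 * e$2))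
        (e$5 - (c3 * e$1 - c1 * e$3)) (e$6 - (c1 * e$2 - c2 * e$1)) 0"
      unfolding e'_def phi_def using a0 b1 c by simp
    have "idem e'" unfolding idem_def e'eq using uv0
      by (simp add: algebra_simps)
    moreover have "e'$0 \<noteq> 0" unfolding e'eq by simp
    ultimately obtain h where h: "h \<in> G2" "h e1 = e'" using reach_nz by blast
    have "(phi (-c1) (-c2) (-c3) \<circ> h) e1 = e" using h(2) unfolding e'_def by (simp add: phi_inv)
    moreover have "phi (-c1) (-c2) (-c3) \<circ> h \<in> G2" by (rule G2_comp[OF phi_G2 h(1)])
    ultimately show ?thesis by blast
  next
    case v0: False
    show ?thesis
    proof (cases "e$1 \<noteq> 0 \<or> e$2 \<noteq> 0 \<or> e$3 \<noteq> 0")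
      case True
      then obtain c1 c2 c3 where c: "c1 * e$1 + c2 * e$2 + c3 * e$3 = 1"
        using dot_one by blast
      define e' where "e' = psi c1 c2 c3 e"
      have e'eq: "e' = oc 1 (e$1) (e$2) (e$3) 0 0 0 0"
        unfolding e'_def psi_def using a0 b1 c v0 by simp
      have "idem e'" unfolding idem_def e'eq by simp
      moreover have "e'$0 \<noteq> 0" unfolding e'eq by simp
    ultimately obtain h where h: "h \<in> G2" "h e1 = e'" using reach_nz by blast
      have "(psi (-c1) (-c2) (-c3) \<circ> h) e1 = e" using h(2) unfolding e'_def by (simp add: psi_inv)
      moreover have "psi (-c1) (-c2) (-c3) \<circ> h \<in> G2" by (rule G2_comp[OF psi_G2 h(1)])
      ultimately show ?thesis by blast
    next
      case False
      have "e = e2" unfolding e2_oc using False v0 a0 b1 by (intro oct_eqI) simp_all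
      moreover have "tau e1 = e2" by (simp add: tau_def e1_oc e2_oc)
      ultimately show ?thesis using tau_G2 by blast
    qed
  qed
qed



lemma sq_root:
  fixes t n :: "'a::alg_closed_field"
  shows "\<exists>l. l * l - t * l + n = 0"
proof -
  obtain x where x: "(\<Sum>k\<le>2. (\<lambda>k. if k = 0 then n else if k = 1 then - t else 1) k * x ^ k) = 0"
    using alg_closed[of 2 "\<lambda>k. if k = 0 then n else if k = 1 then - t else (1::'a)"] by auto
  have "(\<Sum>k\<le>2. (\<lambda>k. if k = 0 then n else if k = 1 then - t else 1) k * x ^ k) = n - t * x + x * x"
    by (simp add: numeral_2_eq_2 power2_eq_square)
  with x show ?thesis by (intro exI[of _ x]) (simp add: algebra_simps)
qed

lemma char2_two:
  assumes "CHAR('a::comm_ring_1) = 2" shows "(2::'a) = 0"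
  using of_nat_CHAR[where 'a='a] assms by simp

lemma sub_add: "is_subalgebra A \<Longrightarrow> x \<in> A \<Longrightarrow> y \<in> A \<Longrightarrow> x + y \<in> A"
  unfolding is_subalgebra_def using vec.subspace_add by blast
lemma sub_diff: "is_subalgebra A \<Longrightarrow> x \<in> A \<Longrightarrow> y \<in> A \<Longrightarrow> x - y \<in> A"
  unfolding is_subalgebra_def using vec.subspace_diff by blast
lemma sub_scale: "is_subalgebra A \<Longrightarrow> x \<in> A \<Longrightarrow> c *s x \<in> A"
  unfolding is_subalgebra_def using vec.subspace_scale by blast
lemma sub_mult: "is_subalgebra A \<Longrightarrow> x \<in> A \<Longrightarrow> y \<in> A \<Longrightarrow> omult x y \<in> A"
  unfolding is_subalgebra_def by blast

lemma idem_exists: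
  fixes A :: "'a::alg_closed_field oct set"
  assumes ch: "CHAR('a) = 2" and sub: "is_subalgebra A" and aA: "a \<in> A" and tr: "a$0 + a$7 \<noteq> 0"
  shows "\<exists>e\<in>A. idem e"
proof -
  define t where "t = a$0 + a$7"
  define n where "n = a$0 * a$7 - (a$1 * a$4 + a$2 * a$5 + a$3 * a$6)"
  have t0: "t \<noteq> 0" using tr unfolding t_def .
  have two: "(2::'a) = 0" by (rule char2_two[OF ch])
  obtain l where l: "l * l - t * l + n = 0" and ln: "n = 0 \<Longrightarrow> l = 0"
  proof (cases "n = 0")
    case True then show ?thesis using that[of 0] by simp
  next
    case False then show ?thesis using that sq_root[of t n] by blast
  qed
  define one :: "'a oct" where "one = oc 1 0 0 0 0 0 0 1"
  define e where "e = (1/t) *s (a - l *s one)"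
  have eA: "e \<in> A"
  proof (cases "n = 0")
    case True
    then have "e = (1/t) *s a" unfolding e_def using ln by simp
    then show ?thesis using sub_scale[OF sub aA] by simp
  next
    case False
    have "one = (1/n) *s (t *s a - omult a a)"
    proof (rule oct_eqI)
      have c0: "(t *s a - omult a a) $ 0 = n" by (simp add: omult_nth t_def n_def algebra_simps)
      have c7: "(t *s a - omult a a) $ 7 = n" by (simp add: omult_nth t_def n_def algebra_simps)
      show "one $ 0 = ((1/n) *s (t *s a - omult a a)) $ 0"
        using False by (simp only: vector_smult_component c0) (simp add: one_def)
      show "one $ 7 = ((1/n) *s (t *s a - omult a a)) $ 7"
        using False by (simp only: vector_smult_component c7) (simp add: one_def)
    qed (simp_all add: one_def omult_nth t_def algebra_simps)
    then have "one \<in> A" using sub aA by (simp add: sub_scale sub_diff sub_mult)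
    then show ?thesis unfolding e_def using sub aA by (simp add: sub_scale sub_diff)
  qed
  have "idem e"
  proof -
    have e0: "e$0 = (a$0 - l) / t" and e7: "e$7 = (a$7 - l) / t"
      unfolding e_def one_def by (simp_all add: diff_divide_distrib)
    have ei: "e$1 = a$1 / t" "e$2 = a$2 / t" "e$3 = a$3 / t" "e$4 = a$4 / t" "e$5 = a$5 / t" "e$6 = a$6 / t"
      unfolding e_def one_def by (simp_all add: field_simps)
    have ll: "l + l = 0" using two by (metis mult_2 mult_zero_left)
    have "e$0 + e$7 = (t - (l + l)) / t" unfolding e0 e7 add_divide_distrib[symmetric]
      by (rule arg_cong[where f="\<lambda>x. x / t"]) (simp add: t_def algebra_simps)
    also have "\<dots> = 1" using ll t0 by simp
    finally have c1: "e$0 + e$7 = 1" .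
    have "e$1 * e$4 + e$2 * e$5 + e$3 * e$6 = (a$1 * a$4 + a$2 * a$5 + a$3 * a$6) / (t * t)"
      unfolding ei using t0 by (simp add: field_simps)
    also have "a$1 * a$4 + a$2 * a$5 + a$3 * a$6 = (a$0 - l) * (a$7 - l)"
    proof -
      have "(a$0 - l) * (a$7 - l) = a$0 * a$7 - t * l + l * l" unfolding t_def by (simp add: algebra_simps)
      also have "\<dots> = a$0 * a$7 - n" using l by (simp add: algebra_simps eq_neg_iff_add_eq_0)
      finally show ?thesis unfolding n_def by simp
    qed
    also have "(a$0 - l) * (a$7 - l) / (t * t) = e$0 * e$7" unfolding e0 e7 by simp
    finally show ?thesis unfolding idem_def using c1 by simp
  qed
  with eA show ?thesis by blast
qed



lemma span2: "a *s p + b *s q \<in> vec.span {p, q}"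
  by (intro vec.span_add vec.span_scale vec.span_base) auto

lemma dep_aux:
  fixes v w v' w' :: "'a::field"
  assumes "v \<noteq> 0" "v * w' = v' * w" shows "w' = w / v * v'"
proof -
  have "w / v * v' = (v' * w) / v" by simp
  also have "\<dots> = (v * w') / v" using assms(2) by simp
  also have "\<dots> = w'" using assms(1) by simp
  finally show ?thesis by simp
qed

lemma crossdep:
  fixes v1 v2 v3 w1 w2 w3 :: "'a::field"
  assumes "v1 \<noteq> 0 \<or> v2 \<noteq> 0 \<or> v3 \<noteq> 0" "v2 * w3 - v3 * w2 = 0" "v3 * w1 - v1 * w3 = 0" "v1 * w2 - v2 * w1 = 0"
  shows "\<exists>c. w1 = c * v1 \<and> w2 = c * v2 \<and> w3 = c * v3"
proof -
  have e: "v2 * w3 = v3 * w2" "v3 * w1 = v1 * w3" "v1 * w2 = v2 * w1" using assms(2-4) by simp_all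
  show ?thesis using assms(1)
  proof (elim disjE)
    assume h: "v1 \<noteq> 0"
    show ?thesis
      by (rule exI[of _ "w1 / v1"]) (intro conjI dep_aux[OF h]; use e in \<open>simp add: algebra_simps\<close>)
  next
    assume h: "v2 \<noteq> 0"
    show ?thesis
      by (rule exI[of _ "w2 / v2"]) (intro conjI dep_aux[OF h]; use e in \<open>simp add: algebra_simps\<close>)
  next
    assume h: "v3 \<noteq> 0"
    show ?thesis
      by (rule exI[of _ "w3 / v3"]) (intro conjI dep_aux[OF h]; use e in \<open>simp add: algebra_simps\<close>)
  qed
qed



lemma core:
  fixes B :: "'a::field oct set"
  assumes sub: "is_subalgebra B" and e1B: "e1 \<in> B" and nsp: "\<And>p q. \<not> B \<subseteq> vec.span {p, q}"
  shows "\<exists>h\<in>G2. (h e1 \<in> B \<and> h e2 \<in> B \<and> h (uu 1) \<in> B) \<or> (h e1 \<in> B \<and> h (uu 1) \<in> B \<and> h (vv 2) \<in> B)"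
proof -
  have le: "omult e1 x = oc (x$0) (x$1) (x$2) (x$3) 0 0 0 0" for x :: "'a oct"
    by (simp add: e1_oc omult_nth)
  have re: "omult x e1 = oc (x$0) 0 0 0 (x$4) (x$5) (x$6) 0" for x :: "'a oct"
    by (simp add: e1_oc omult_nth)
  have PU: "oc 0 (x$1) (x$2) (x$3) 0 0 0 0 \<in> B" if "x \<in> B" for x
  proof -
    have "oc 0 (x$1) (x$2) (x$3) 0 0 0 0 = omult e1 x - omult (omult e1 x) e1"
      unfolding re le by simp
    then show ?thesis using that e1B sub by (simp add: sub_mult sub_diff)
  qed
  have PV: "oc 0 0 0 0 (x$4) (x$5) (x$6) 0 \<in> B" if "x \<in> B" for x
  proof -
    have "oc 0 0 0 0 (x$4) (x$5) (x$6) 0 = omult x e1 - omult e1 (omult x e1)"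
      unfolding re le by simp
    then show ?thesis using that e1B sub by (simp add: sub_mult sub_diff)
  qed
  have Pb: "oc 0 0 0 0 0 0 0 (x$7) \<in> B" if "x \<in> B" for x
  proof -
    have "oc 0 0 0 0 0 0 0 (x$7) = x - omult e1 x - omult x e1 + omult (omult e1 x) e1"
      unfolding re le by (rule oct_eqI) simp_all
    then show ?thesis using that e1B sub by (simp add: sub_mult sub_diff sub_add)
  qed
  show ?thesis
  proof (cases "\<exists>x\<in>B. x$7 \<noteq> 0")
    case True
    then obtain x where x: "x \<in> B" "x$7 \<noteq> 0" by blast
    have eq: "e2 = (1 / x$7) *s oc 0 0 0 0 0 0 0 (x$7)" using x(2) by (simp add: e2_oc)
    have "(1 / x$7) *s oc 0 0 0 0 0 0 0 (x$7) \<in> B" by (rule sub_scale[OF sub Pb[OF x(1)]])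
    then have e2B: "e2 \<in> B" using eq by metis
    show ?thesis
    proof (cases "\<exists>y\<in>B. y$1 \<noteq> 0 \<or> y$2 \<noteq> 0 \<or> y$3 \<noteq> 0")
      case True
      then obtain y where y: "y \<in> B" "y$1 \<noteq> 0 \<or> y$2 \<noteq> 0 \<or> y$3 \<noteq> 0" by blast
      obtain h where h: "h \<in> G2" "h e1 = e1" "h e2 = e2" "h (uu 1) = oc 0 (y$1) (y$2) (y$3) 0 0 0 0"
        using frame_G2'[OF y(2)] by blast
      show ?thesis using h e1B e2B PU[OF y(1)] by (intro bexI[OF _ h(1)]) simp
    next
      case noU: False
      show ?thesis
      proof (cases "\<exists>y\<in>B. y$4 \<noteq> 0 \<or> y$5 \<noteq> 0 \<or> y$6 \<noteq> 0")
        case True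
        then obtain y where y: "y \<in> B" "y$4 \<noteq> 0 \<or> y$5 \<noteq> 0 \<or> y$6 \<noteq> 0" by blast
        then have y': "- y$4 \<noteq> 0 \<or> - y$5 \<noteq> 0 \<or> - y$6 \<noteq> 0" by simp
        obtain h where h: "h \<in> G2" "h e1 = e1" "h e2 = e2" "h (uu 1) = oc 0 (- y$4) (- y$5) (- y$6) 0 0 0 0"
          using frame_G2'[OF y'] by blast
        have "tau \<circ> h \<in> G2" by (rule G2_comp[OF tau_G2 h(1)])
        moreover have "(tau \<circ> h) e1 = e2" "(tau \<circ> h) e2 = e1"
          "(tau \<circ> h) (uu 1) = oc 0 0 0 0 (y$4) (y$5) (y$6) 0"
          using h by (simp_all add: tau_def e1_oc e2_oc)
        ultimately show ?thesis using e1B e2B PV[OF y(1)] by (intro bexI[of _ "tau \<circ> h"]) simp_all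
      next
        case False
        have "B \<subseteq> vec.span {e1, e2}"
        proof
          fix y assume y: "y \<in> B"
          have "y = y$0 *s e1 + y$7 *s e2" using False noU y
            by (intro oct_eqI) (auto simp: e1_oc e2_oc)
          then show "y \<in> vec.span {e1, e2}" using span2 by metis
        qed
        then show ?thesis using nsp by blast
      qed
    qed
  next
    case nob: False
    show ?thesis
    proof (cases "(\<exists>x\<in>B. x$1 \<noteq> 0 \<or> x$2 \<noteq> 0 \<or> x$3 \<noteq> 0) \<and> (\<exists>y\<in>B. y$4 \<noteq> 0 \<or> y$5 \<noteq> 0 \<or> y$6 \<noteq> 0)")
      case True
      then obtain x y where x: "x \<in> B" "x$1 \<noteq> 0 \<or> x$2 \<noteq> 0 \<or> x$3 \<noteq> 0"
        and y: "y \<in> B" "y$4 \<noteq> 0 \<or> y$5 \<noteq> 0 \<or> y$6 \<noteq> 0" by blast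
      have "omult (oc 0 0 0 0 (y$4) (y$5) (y$6) 0) (oc 0 (x$1) (x$2) (x$3) 0 0 0 0) \<in> B"
        using sub PU[OF x(1)] PV[OF y(1)] by (simp add: sub_mult)
      then have "(omult (oc 0 0 0 0 (y$4) (y$5) (y$6) 0) (oc 0 (x$1) (x$2) (x$3) 0 0 0 0)) $ 7 = 0"
        using nob by blast
      then have perp: "x$1 * y$4 + x$2 * y$5 + x$3 * y$6 = 0" by (simp add: omult_nth algebra_simps)
      obtain h where h: "h \<in> G2" "h e1 = e1" "h (uu 1) = oc 0 (x$1) (x$2) (x$3) 0 0 0 0"
          "h (vv 2) = oc 0 0 0 0 (y$4) (y$5) (y$6) 0"
        using frame_G2[OF x(2) y(2) perp] by blast
      show ?thesis using h e1B PU[OF x(1)] PV[OF y(1)] by (intro bexI[OF _ h(1)]) simp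
    next
      case False
      then consider "\<forall>x\<in>B. x$1 = 0 \<and> x$2 = 0 \<and> x$3 = 0" | "\<forall>y\<in>B. y$4 = 0 \<and> y$5 = 0 \<and> y$6 = 0"
        by blast
      then show ?thesis
      proof cases
        case noU: 1
        show ?thesis
        proof (cases "\<exists>y\<in>B. y$4 \<noteq> 0 \<or> y$5 \<noteq> 0 \<or> y$6 \<noteq> 0")
          case True
          then obtain y where y: "y \<in> B" "y$4 \<noteq> 0 \<or> y$5 \<noteq> 0 \<or> y$6 \<noteq> 0" by blast
          have "B \<subseteq> vec.span {e1, oc 0 0 0 0 (y$4) (y$5) (y$6) 0}"
          proof
            fix x assume xB: "x \<in> B"
            have "omult (oc 0 0 0 0 (y$4) (y$5) (y$6) 0) (oc 0 0 0 0 (x$4) (x$5) (x$6) 0) \<in> B"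
              using sub PV[OF xB] PV[OF y(1)] by (simp add: sub_mult)
            then have "y$5 * x$6 - y$6 * x$5 = 0" "y$6 * x$4 - y$4 * x$6 = 0" "y$4 * x$5 - y$5 * x$4 = 0"
              using noU by (auto simp: omult_nth)
            then obtain c where c: "x$4 = c * y$4" "x$5 = c * y$5" "x$6 = c * y$6"
              using crossdep[OF y(2)] by blast
            have "x = x$0 *s e1 + c *s oc 0 0 0 0 (y$4) (y$5) (y$6) 0"
              using noU nob xB c by (intro oct_eqI) (auto simp: e1_oc)
            then show "x \<in> vec.span {e1, oc 0 0 0 0 (y$4) (y$5) (y$6) 0}" using span2 by metis
          qed
          then show ?thesis using nsp by blast
        next
          case False
          have "B \<subseteq> vec.span {e1, e1}"
          proof
            fix x assume xB: "x \<in> B"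
            have "x = x$0 *s e1 + 0 *s e1"
              using noU nob xB False by (intro oct_eqI) (auto simp: e1_oc)
            then show "x \<in> vec.span {e1, e1}" using span2 by metis
          qed
          then show ?thesis using nsp by blast
        qed
      next
        case noV: 2
        show ?thesis
        proof (cases "\<exists>y\<in>B. y$1 \<noteq> 0 \<or> y$2 \<noteq> 0 \<or> y$3 \<noteq> 0")
          case True
          then obtain y where y: "y \<in> B" "y$1 \<noteq> 0 \<or> y$2 \<noteq> 0 \<or> y$3 \<noteq> 0" by blast
          have "B \<subseteq> vec.span {e1, oc 0 (y$1) (y$2) (y$3) 0 0 0 0}"
          proof
            fix x assume xB: "x \<in> B"
            have "omult (oc 0 (y$1) (y$2) (y$3) 0 0 0 0) (oc 0 (x$1) (x$2) (x$3) 0 0 0 0) \<in> B"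
              using sub PU[OF xB] PU[OF y(1)] by (simp add: sub_mult)
            then have "y$2 * x$3 - y$3 * x$2 = 0" "y$3 * x$1 - y$1 * x$3 = 0" "y$1 * x$2 - y$2 * x$1 = 0"
              using noV by (auto simp: omult_nth)
            then obtain c where c: "x$1 = c * y$1" "x$2 = c * y$2" "x$3 = c * y$3"
              using crossdep[OF y(2)] by blast
            have "x = x$0 *s e1 + c *s oc 0 (y$1) (y$2) (y$3) 0 0 0 0"
              using noV nob xB c by (intro oct_eqI) (auto simp: e1_oc)
            then show "x \<in> vec.span {e1, oc 0 (y$1) (y$2) (y$3) 0 0 0 0}" using span2 by metis
          qed
          then show ?thesis using nsp by blast
        next
          case False
          have "B \<subseteq> vec.span {e1, e1}"
          proof
            fix x assume xB: "x \<in> B"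
            have "x = x$0 *s e1 + 0 *s e1"
              using noV nob xB False by (intro oct_eqI) (auto simp: e1_oc)
            then show "x \<in> vec.span {e1, e1}" using span2 by metis
          qed
          then show ?thesis using nsp by blast
        qed
      qed
    qed
  qed
qed



theorem lemma6p11:
  fixes A :: "'a::alg_closed_field oct set"
  assumes "CHAR('a) = 2"
    and "is_subalgebra A"
    and "\<not> A \<subseteq> O0"
    and "vec.dim A \<ge> 3"
  shows "\<exists>g\<in>G2. {e1, e2, uu 1} \<subseteq> g ` A \<or> {e1, uu 1, vv 2} \<subseteq> g ` A"
proof -
  note sub = assms(2)
  obtain a where aA: "a \<in> A" and tr: "a$0 + a$7 \<noteq> 0"
    using assms(3) unfolding O0_def otr_def oalpha_def obeta_def by auto
  obtain e where eA: "e \<in> A" and ie: "idem e" using idem_exists[OF assms(1) sub aA tr] by blast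
  obtain h0 where h0: "h0 \<in> G2" "h0 e1 = e" using reach[OF ie] by blast
  have lin: "Vector_Spaces.linear (*s) (*s) h0" and bij: "bij h0"
    and mul: "\<And>x y. h0 (omult x y) = omult (h0 x) (h0 y)"
    using h0(1) unfolding G2_def by auto
  have add: "h0 (x + y) = h0 x + h0 y" and scl: "h0 (c *s x) = c *s h0 x" for x y c
    using lin unfolding Vector_Spaces.linear_iff by auto
  have z: "h0 0 = 0" using scl[of 0 0] by simp
  define B where "B = {x. h0 x \<in> A}"
  have subA: "vec.subspace A" using sub unfolding is_subalgebra_def by auto
  have "is_subalgebra B"
    unfolding is_subalgebra_def vec.subspace_def B_def
    using z add scl mul sub vec.subspace_0[OF subA]
    by (auto simp: sub_add sub_scale sub_mult)
  moreover have "e1 \<in> B" unfolding B_def using h0(2) eA by simp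
  moreover have "\<not> B \<subseteq> vec.span {p, q}" for p q
  proof
    assume Bs: "B \<subseteq> vec.span {p, q}"
    have "A \<subseteq> vec.span {h0 p, h0 q}"
    proof
      fix y assume yA: "y \<in> A"
      have hy: "h0 (inv h0 y) = y" using bij by (simp add: bij_is_surj surj_f_inv_f)
      then have "inv h0 y \<in> B" unfolding B_def using yA by simp
      then have "inv h0 y \<in> vec.span {p, q}" using Bs by blast
      then have "y \<in> h0 ` vec.span {p, q}" using hy by (metis image_eqI)
      then show "y \<in> vec.span {h0 p, h0 q}" using vec.linear_span_image[OF lin, of "{p, q}"] by simp
    qed
    then have "vec.dim A \<le> card {h0 p, h0 q}" by (rule vec.dim_le_card) simp
    also have "\<dots> \<le> 2" by (cases "h0 p = h0 q") auto
    finally show False using assms(4) by simp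
  qed
  ultimately obtain h where h: "h \<in> G2"
    and hB: "(h e1 \<in> B \<and> h e2 \<in> B \<and> h (uu 1) \<in> B) \<or> (h e1 \<in> B \<and> h (uu 1) \<in> B \<and> h (vv 2) \<in> B)"
    using core by blast
  define k where "k = h0 \<circ> h"
  have k: "k \<in> G2" unfolding k_def by (rule G2_comp[OF h0(1) h])
  have kinj: "inj k" using k unfolding G2_def by (auto intro: bij_is_inj)
  have mem: "s \<in> inv k ` A" if "h s \<in> B" for s
  proof -
    have "k s \<in> A" using that unfolding B_def k_def by simp
    moreover have "inv k (k s) = s" using kinj by simp
    ultimately show ?thesis by (metis image_eqI)
  qed
  show ?thesis
    by (rule bexI[OF _ G2_inv[OF k]]) (use hB mem in blast)
qed

end
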